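(* Assume (C1) and (C2). Let $d_0\in(0,+\infty)$. Every Cerami sequence $\{u_k\}\subset\mathcal{D}$ of $I$ at level $d_0$ has at least one subsequence that converges in $\mathcal{D}$. Here a Cerami sequence at level $d_0$ is a sequence with $I(u_k)\to d_0$ and $\|I'(u_k)\|(1+\|u_k\|)\to0$.
   Context: Fix real numbers $p,q,r$ with $1<p<q$, $\frac p2$ a positive integer, and $r\ge1$, and functions $a,b,c:\mathbb{Z}\to(0,+\infty)$. Conditions: - (C1) There is $b_0>0$ with $b(n)\ge b_0$ for all $n$ and $b(n)\to+\infty$ as $|n|\to\infty$. - (C2) There is $c_0>0$ with $c(n)\le c_0$ for all $n$ and $\sum_n c(n)<+\infty$. Notation and spaces: - $\Delta u(n)=u(n+1)-u(n)$. - $E$ is the set of real sequences $u$ with $\|u\|:=\big(\sum_n[a(n)|\Delta u(n)|^p+b(n)|u(n)|^p]\big)^{1/p}<\infty$. - $\mathcal{D}=\{u\in E:\sum_n c(n)|u(n)|^q\ln|u(n)|^r<+\infty\}$, where terms with $u(n)=0$ are read as $0$. It carries the norm $\|\cdot\|$. For $u,v\in\mathcal{D}$: - $I(u)=\frac1p\|u\|^p+\frac{r}{q^2}\sum_n c(n)|u(n)|^q-\frac1q\sum_n c(n)|u(n)|^q\ln|u(n)|^r$. - $\langle I'(u),v\rangle=\sum_n[a(n)|\Delta u(n)|^{p-2}\Delta u(n)\Delta v(n)+b(n)|u(n)|^{p-2}u(n)v(n)]-\sum_n c(n)|u(n)|^{q-2}u(n)v(n)\ln|u(n)|^r$. - $\|I'(u)\|$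 denotes the dual norm $\sup\{|\langle I'(u),v\rangle|:v\in\mathcal{D},\|v\|\le1\}$. *)

theory Defs
  imports "HOL-Analysis.Analysis"
begin

definition fdiff :: "(int \<Rightarrow> real) \<Rightarrow> int \<Rightarrow> real" where
  "fdiff u n = u (n + 1) - u n"

definition Eterm :: "(int \<Rightarrow> real) \<Rightarrow> (int \<Rightarrow> real) \<Rightarrow> real \<Rightarrow> (int \<Rightarrow> real) \<Rightarrow> int \<Rightarrow> real" where
  "Eterm a b p u n = a n * \<bar>fdiff u n\<bar> powr p + b n * \<bar>u n\<bar> powr p"

definition inE :: "(int \<Rightarrow> real) \<Rightarrow> (int \<Rightarrow> real) \<Rightarrow> real \<Rightarrow> (int \<Rightarrow> real) \<Rightarrow> bool" where
  "inE a b p u \<longleftrightarrow> (Eterm a b p u) summable_on UNIV"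

definition Enorm :: "(int \<Rightarrow> real) \<Rightarrow> (int \<Rightarrow> real) \<Rightarrow> real \<Rightarrow> (int \<Rightarrow> real) \<Rightarrow> real" where
  "Enorm a b p u = (infsum (Eterm a b p u) UNIV) powr (1 / p)"

text \<open>Term c(n)|u(n)|^q ln |u(n)|^r ; it is 0 when u(n) = 0 (0 powr _ = 0, ln 0 = 0).\<close>
definition logterm :: "(int \<Rightarrow> real) \<Rightarrow> real \<Rightarrow> real \<Rightarrow> (int \<Rightarrow> real) \<Rightarrow> int \<Rightarrow> real" where
  "logterm c q r u n = c n * \<bar>u n\<bar> powr q * ln (\<bar>u n\<bar> powr r)"

definition inD :: "(int \<Rightarrow> real) \<Rightarrow> (int \<Rightarrow> real) \<Rightarrow> (int \<Rightarrow> real) \<Rightarrow> real \<Rightarrow> real \<Rightarrow> real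
    \<Rightarrow> (int \<Rightarrow> real) \<Rightarrow> bool" where
  "inD a b c p q r u \<longleftrightarrow> inE a b p u \<and> (logterm c q r u) summable_on UNIV"

definition Ifun :: "(int \<Rightarrow> real) \<Rightarrow> (int \<Rightarrow> real) \<Rightarrow> (int \<Rightarrow> real) \<Rightarrow> real \<Rightarrow> real \<Rightarrow> real
    \<Rightarrow> (int \<Rightarrow> real) \<Rightarrow> real" where
  "Ifun a b c p q r u =
     (1 / p) * (Enorm a b p u powr p)
     + (r / q\<^sup>2) * infsum (\<lambda>n. c n * \<bar>u n\<bar> powr q) UNIV
     - (1 / q) * infsum (logterm c q r u) UNIV"

definition Ideriv :: "(int \<Rightarrow> real) \<Rightarrow> (int \<Rightarrow> real) \<Rightarrow> (int \<Rightarrow> real) \<Rightarrow> real \<Rightarrow> real \<Rightarrow> real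
    \<Rightarrow> (int \<Rightarrow> real) \<Rightarrow> (int \<Rightarrow> real) \<Rightarrow> real" where
  "Ideriv a b c p q r u v =
     infsum (\<lambda>n. a n * \<bar>fdiff u n\<bar> powr (p - 2) * fdiff u n * fdiff v n
                 + b n * \<bar>u n\<bar> powr (p - 2) * u n * v n) UNIV
     - infsum (\<lambda>n. c n * \<bar>u n\<bar> powr (q - 2) * u n * v n * ln (\<bar>u n\<bar> powr r)) UNIV"

text \<open>Dual norm, valued in the extended reals (it may a priori be infinite).\<close>
definition dualnorm :: "(int \<Rightarrow> real) \<Rightarrow> (int \<Rightarrow> real) \<Rightarrow> (int \<Rightarrow> real) \<Rightarrow> real \<Rightarrow> real \<Rightarrow> real
    \<Rightarrow> (int \<Rightarrow> real) \<Rightarrow> ereal" where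
  "dualnorm a b c p q r u =
     (SUP v \<in> {v. inD a b c p q r v \<and> Enorm a b p v \<le> 1}. ereal \<bar>Ideriv a b c p q r u v\<bar>)"

end

theory Submission
  imports Defs
begin

lemma powr_even: assumes "m > 0" shows "\<bar>t::real\<bar> powr (2 * real m) = t ^ (2 * m)"
proof (cases "t = 0")
  case True thus ?thesis using assms by simp
next
  case False
  have "\<bar>t\<bar> powr (real (2 * m)) = \<bar>t\<bar> ^ (2 * m)" by (rule powr_realpow) (use False in simp)
  hence "\<bar>t\<bar> powr (2 * real m) = \<bar>t\<bar> ^ (2 * m)" by simp
  thus ?thesis by (simp add: power_even_abs)
qed

lemma phi_eq: "m > 0 \<Longrightarrow> \<bar>t::real\<bar> powr (2 * real m - 2) * t = t ^ (2 * m - 1)"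
proof (cases "t = 0")
  case True
  assume "m > 0" thus ?thesis using True by simp
next
  case False
  assume m: "m > 0"
  have e: "2 * real m - 2 = real (2 * m - 2)" using m by (simp add: of_nat_diff)
  have "\<bar>t\<bar> powr (2 * real m - 2) = \<bar>t\<bar> ^ (2 * m - 2)" unfolding e
    by (rule powr_realpow) (use False in simp)
  also have "\<dots> = t ^ (2 * m - 2)" by (rule power_even_abs) simp
  finally have "\<bar>t\<bar> powr (2 * real m - 2) * t = t ^ (2 * m - 2) * t" by simp
  also have "\<dots> = t ^ (2 * m - 1)"
  proof -
    have "Suc (2 * m - 2) = 2 * m - 1" using m by simp
    thus ?thesis using power_Suc2[of t "2 * m - 2"] by simp
  qed
  finally show ?thesis .
qed

lemma young_pow: "m > 0 \<Longrightarrow> \<bar>(x::real) ^ (2 * m - 1) * y\<bar> \<le> x ^ (2 * m) + y ^ (2 * m)"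
proof -
  assume m: "m > 0"
  have xe: "x ^ (2*m) = \<bar>x\<bar> ^ (2*m)" "y ^ (2*m) = \<bar>y\<bar> ^ (2*m)" by (simp_all add: power_even_abs)
  have s: "Suc (2*m - 1) = 2*m" using m by simp
  have "\<bar>x ^ (2 * m - 1) * y\<bar> = \<bar>x\<bar> ^ (2 * m - 1) * \<bar>y\<bar>" by (simp add: abs_mult power_abs)
  also have "\<dots> \<le> \<bar>x\<bar> ^ (2*m) + \<bar>y\<bar> ^ (2*m)"
  proof (cases "\<bar>y\<bar> \<le> \<bar>x\<bar>")
    case True
    hence "\<bar>x\<bar> ^ (2 * m - 1) * \<bar>y\<bar> \<le> \<bar>x\<bar> ^ (2 * m - 1) * \<bar>x\<bar>" by (simp add: mult_left_mono)
    also have "\<dots> = \<bar>x\<bar> ^ (2*m)" using s power_Suc2[of "\<bar>x\<bar>" "2*m-1"] by simp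
    finally show ?thesis using zero_le_power[OF abs_ge_zero, of y "2*m"] by linarith
  next
    case False
    hence "\<bar>x\<bar> ^ (2 * m - 1) * \<bar>y\<bar> \<le> \<bar>y\<bar> ^ (2 * m - 1) * \<bar>y\<bar>"
      by (simp add: mult_right_mono power_mono)
    also have "\<dots> = \<bar>y\<bar> ^ (2*m)" using s power_Suc2[of "\<bar>y\<bar>" "2*m-1"] by simp
    finally show ?thesis using zero_le_power[OF abs_ge_zero, of x "2*m"] by linarith
  qed
  finally show ?thesis using xe by simp
qed

lemma sub_pow: "(x - y::real) ^ (2 * m) \<le> 2 ^ (2 * m) * (x ^ (2 * m) + y ^ (2 * m))"
proof -
  define M where "M = max \<bar>x\<bar> \<bar>y\<bar>"
  have "\<bar>x - y\<bar> \<le> 2 * M" unfolding M_def by auto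
  hence "\<bar>x - y\<bar> ^ (2*m) \<le> (2 * M) ^ (2*m)" by (rule power_mono[OF _ abs_ge_zero])
  also have "\<dots> = 2 ^ (2*m) * M ^ (2*m)" by (simp add: power_mult_distrib)
  also have "M ^ (2*m) \<le> \<bar>x\<bar> ^ (2*m) + \<bar>y\<bar> ^ (2*m)" unfolding M_def
    by (cases "\<bar>x\<bar> \<le> \<bar>y\<bar>") (auto simp: max_def)
  hence "2 ^ (2*m) * M ^ (2*m) \<le> 2 ^ (2*m) * (\<bar>x\<bar> ^ (2*m) + \<bar>y\<bar> ^ (2*m))" by simp
  finally show ?thesis by (simp add: power_even_abs)
qed

lemma mono_pow:
  assumes m: "m > 0"
  shows "(x - y::real) ^ (2 * m) / 2 ^ (2 * m - 1) \<le> (x ^ (2 * m - 1) - y ^ (2 * m - 1)) * (x - y)"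
proof -
  define n where "n = 2 * m - 2"
  have n2: "2 * m = n + 2" "2 * m - 1 = n + 1" using m by (simp_all add: n_def)
  have ev: "even n" by (simp add: n_def)
  have px: "x ^ (n+1) = \<bar>x\<bar> ^ n * x" "y ^ (n+1) = \<bar>y\<bar> ^ n * y"
    using ev by (simp_all add: power_even_abs mult.commute)
  have id0: "2 * ((\<bar>x\<bar> ^ n * x - \<bar>y\<bar> ^ n * y) * (x - y))
      = (\<bar>x\<bar> ^ n + \<bar>y\<bar> ^ n) * (x - y)^2 + (\<bar>x\<bar> ^ n - \<bar>y\<bar> ^ n) * (x^2 - y^2)"
    by (simp add: power2_eq_square algebra_simps)
  hence id: "(\<bar>x\<bar> ^ n * x - \<bar>y\<bar> ^ n * y) * (x - y)
      = (\<bar>x\<bar> ^ n + \<bar>y\<bar> ^ n) * (x - y)^2 / 2 + (\<bar>x\<bar> ^ n - \<bar>y\<bar> ^ n) * (x^2 - y^2) / 2"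
    by (simp add: field_simps)
  have nn: "0 \<le> (\<bar>x\<bar> ^ n - \<bar>y\<bar> ^ n) * (x^2 - y^2)"
  proof (cases "\<bar>y\<bar> \<le> \<bar>x\<bar>")
    case True
    hence "\<bar>y\<bar> ^ n \<le> \<bar>x\<bar> ^ n" "y^2 \<le> x^2" by (simp_all add: power_mono abs_le_square_iff)
    thus ?thesis by simp
  next
    case False
    hence "\<bar>x\<bar> ^ n \<le> \<bar>y\<bar> ^ n" "x^2 \<le> y^2" by (simp_all add: power_mono abs_le_square_iff)
    thus ?thesis by (simp add: mult_nonpos_nonpos)
  qed
  define M where "M = max \<bar>x\<bar> \<bar>y\<bar>"
  have "\<bar>x - y\<bar> \<le> 2 * M" unfolding M_def by auto
  hence "\<bar>x - y\<bar> ^ n \<le> (2 * M) ^ n" by (rule power_mono[OF _ abs_ge_zero])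
  also have "\<dots> = 2 ^ n * M ^ n" by (simp add: power_mult_distrib)
  also have "M ^ n \<le> \<bar>x\<bar> ^ n + \<bar>y\<bar> ^ n" unfolding M_def
    by (cases "\<bar>x\<bar> \<le> \<bar>y\<bar>") (auto simp: max_def)
  hence "2 ^ n * M ^ n \<le> 2 ^ n * (\<bar>x\<bar> ^ n + \<bar>y\<bar> ^ n)" by simp
  finally have b1: "\<bar>x - y\<bar> ^ n \<le> 2 ^ n * (\<bar>x\<bar> ^ n + \<bar>y\<bar> ^ n)" .
  have "(x - y) ^ (n+2) = \<bar>x - y\<bar> ^ n * (x-y)^2" using ev by (simp add: power_add power_even_abs power2_eq_square)
  also have "\<dots> \<le> 2 ^ n * (\<bar>x\<bar> ^ n + \<bar>y\<bar> ^ n) * (x-y)^2" using b1 by (simp add: mult_right_mono)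
  finally have "(x - y) ^ (n+2) / 2 ^ (n+1) \<le> (\<bar>x\<bar> ^ n + \<bar>y\<bar> ^ n) * (x - y)^2 / 2"
    by (simp add: field_simps)
  also have "\<dots> \<le> (\<bar>x\<bar> ^ n * x - \<bar>y\<bar> ^ n * y) * (x - y)" using id nn by simp
  finally have fin: "(x - y) ^ (n+2) / 2 ^ (n+1) \<le> (\<bar>x\<bar> ^ n * x - \<bar>y\<bar> ^ n * y) * (x - y)" .
  have e1: "x^(2*m-1) - y^(2*m-1) = \<bar>x\<bar> ^ n * x - \<bar>y\<bar> ^ n * y" by (simp only: n2(2) px)
  have e2: "(x - y) ^ (2*m) / 2 ^ (2*m-1) = (x - y) ^ (n+2) / 2 ^ (n+1)" using n2 by simp
  show ?thesis unfolding e1 e2 by (rule fin)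
qed

lemma abs_le_pow: "m > 0 \<Longrightarrow> \<bar>t::real\<bar> \<le> 1 + t ^ (2 * m)"
proof -
  assume m: "m > 0"
  show ?thesis
  proof (cases "\<bar>t\<bar> \<le> 1")
    case True
    have "0 \<le> t ^ (2*m)" by (simp add: power_mult)
    thus ?thesis using True by linarith
  next
    case False
    hence "\<bar>t\<bar> ^ 1 \<le> \<bar>t\<bar> ^ (2*m)" using m by (intro power_increasing) auto
    thus ?thesis by (simp add: power_even_abs)
  qed
qed

lemma log_bound:
  assumes s: "s \<ge> 1" and t: "\<bar>t::real\<bar> \<le> B"
  shows "\<bar>t\<bar> powr s * \<bar>ln \<bar>t\<bar>\<bar> \<le> 1 + max 1 B powr (s + 1)"
proof (cases "t = 0")
  case True thus ?thesis by simp
next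
  case False
  hence tp: "\<bar>t\<bar> > 0" by simp
  show ?thesis
  proof (cases "\<bar>t\<bar> \<le> 1")
    case True
    have "\<bar>t\<bar> powr s \<le> \<bar>t\<bar> powr 1" using True tp s by (intro powr_mono') auto
    hence a: "\<bar>t\<bar> powr s \<le> \<bar>t\<bar>" using tp by simp
    have lnn: "ln \<bar>t\<bar> \<le> 0" using True tp by simp
    have "ln (1 / \<bar>t\<bar>) \<le> 1 / \<bar>t\<bar> - 1" using tp by (intro ln_le_minus_one) simp
    hence "- ln \<bar>t\<bar> \<le> 1 / \<bar>t\<bar> - 1" using tp by (simp add: ln_div)
    hence "\<bar>t\<bar> * (- ln \<bar>t\<bar>) \<le> \<bar>t\<bar> * (1 / \<bar>t\<bar> - 1)" by (rule mult_left_mono) simp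
    hence b: "\<bar>t\<bar> * \<bar>ln \<bar>t\<bar>\<bar> \<le> 1" using tp lnn by (simp add: algebra_simps)
    have "\<bar>t\<bar> powr s * \<bar>ln \<bar>t\<bar>\<bar> \<le> \<bar>t\<bar> * \<bar>ln \<bar>t\<bar>\<bar>" using a by (simp add: mult_right_mono)
    also have "\<dots> \<le> 1" by (rule b)
    finally show ?thesis by (smt (verit) powr_ge_zero)
  next
    case False
    hence l: "0 \<le> ln \<bar>t\<bar>" "ln \<bar>t\<bar> \<le> \<bar>t\<bar>" using ln_le_minus_one[of "\<bar>t\<bar>"] tp by auto
    have "\<bar>t\<bar> powr s * \<bar>ln \<bar>t\<bar>\<bar> \<le> \<bar>t\<bar> powr s * \<bar>t\<bar>" using l by (simp add: mult_left_mono)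
    also have "\<dots> = \<bar>t\<bar> powr (s + 1)" using tp by (simp add: powr_add)
    also have "\<dots> \<le> max 1 B powr (s + 1)" using t s tp by (intro powr_mono2) auto
    finally show ?thesis by linarith
  qed
qed


lemma subseq_pointwise:
  fixes u :: "nat \<Rightarrow> int \<Rightarrow> real" and B :: real
  assumes "\<And>k n. \<bar>u k n\<bar> \<le> B"
  shows "\<exists>\<phi> w. strict_mono \<phi> \<and> (\<forall>n. (\<lambda>k. u (\<phi> k) n) \<longlonglongrightarrow> w n) \<and> (\<forall>n. \<bar>w n\<bar> \<le> B)"
proof -
  define S :: "(int \<Rightarrow> real) set" where "S = PiE UNIV (\<lambda>_. {-B..B})"
  have "compactin (product_topology (\<lambda>i. euclidean) UNIV) S"
    unfolding S_def compactin_PiE by auto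
  hence "compact S" by (simp add: euclidean_product_topology)
  hence sc: "seq_compact S" by (rule compact_imp_seq_compact)
  have "- B \<le> u k n \<and> u k n \<le> B" for k n using assms[of k n] by (simp add: abs_le_iff)
  hence "\<forall>k. u k \<in> S" by (auto simp: S_def)
  then obtain w r where w: "w \<in> S" "strict_mono r" "(u \<circ> r) \<longlonglongrightarrow> w"
    using seq_compactE[OF sc] by metis
  have "(\<lambda>k. u (r k) n) \<longlonglongrightarrow> w n" for n
  proof -
    have "continuous_on UNIV (\<lambda>x::int\<Rightarrow>real. x n)" by simp
    from continuous_on_tendsto_compose[OF this w(3)] show ?thesis by (simp add: o_def)
  qed
  moreover have "\<forall>n. \<bar>w n\<bar> \<le> B"
  proof
    fix n
    have "w n \<in> {-B..B}" using w(1) unfolding S_def by (simp add: PiE_iff)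
    thus "\<bar>w n\<bar> \<le> B" by (simp add: abs_le_iff)
  qed
  ultimately show ?thesis using w(2) by blast
qed

lemma dom_summable:
  fixes f g :: "'a \<Rightarrow> real"
  assumes "f summable_on A" "\<And>n. n \<in> A \<Longrightarrow> \<bar>g n\<bar> \<le> f n"
  shows "g summable_on A"
proof -
  have "(\<lambda>n. norm (g n)) summable_on A"
    by (rule summable_on_comparison_test[OF assms(1)]) (use assms(2) in auto)
  thus ?thesis by (rule abs_summable_summable)
qed

lemma infsum_diff_real:
  fixes f g :: "'a \<Rightarrow> real"
  assumes "f summable_on A" "g summable_on A"
  shows "infsum (\<lambda>n. f n - g n) A = infsum f A - infsum g A"
proof -
  have "(\<lambda>n. - g n) summable_on A" using assms(2) by (simp add: summable_on_uminus)
  hence "infsum (\<lambda>n. f n + - g n) A = infsum f A + infsum (\<lambda>n. - g n) A"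
    using assms(1) infsum_add by blast
  thus ?thesis by (simp add: infsum_uminus)
qed

lemma sum_le_infsum:
  fixes f :: "'a \<Rightarrow> real"
  assumes "f summable_on UNIV" "\<And>n. f n \<ge> 0" "finite F"
  shows "sum f F \<le> infsum f UNIV"
proof -
  have "infsum f F \<le> infsum f UNIV"
    by (rule infsum_mono_neutral) (use assms in auto)
  thus ?thesis using assms(3) by simp
qed

lemma tail_cauchy:
  fixes c :: "int \<Rightarrow> real" and f :: "nat \<Rightarrow> int \<Rightarrow> real"
  assumes cnn: "\<And>n. c n \<ge> 0" and cs: "c summable_on UNIV"
    and fb: "\<And>k n. \<bar>f k n\<bar> \<le> B" and lim: "\<And>n. (\<lambda>k. f k n) \<longlonglongrightarrow> g n"
    and e: "\<epsilon> > 0"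
  shows "\<exists>K. \<forall>k j. K \<le> k \<longrightarrow> K \<le> j \<longrightarrow> infsum (\<lambda>n. c n * \<bar>f k n - f j n\<bar>) UNIV \<le> \<epsilon>"
proof -
  have B0: "B \<ge> 0" using fb[of 0 0] by simp
  define S where "S = infsum c UNIV"
  have S0: "S \<ge> 0" unfolding S_def by (rule infsum_nonneg) (use cnn in auto)
  define d1 where "d1 = \<epsilon> / (4 * (B + 1))"
  have d1: "d1 > 0" using e B0 by (simp add: d1_def)
  obtain F where F: "finite F" "dist (sum c F) S \<le> d1"
    using infsum_finite_approximation[OF cs d1] unfolding S_def by blast
  define d2 where "d2 = \<epsilon> / (4 * (S + 1))"
  have d2: "d2 > 0" using e S0 by (simp add: d2_def)
  have "\<forall>n\<in>F. eventually (\<lambda>k. dist (f k n) (g n) < d2) sequentially"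
    using lim d2 by (auto simp: tendsto_iff)
  hence "eventually (\<lambda>k. \<forall>n\<in>F. dist (f k n) (g n) < d2) sequentially"
    by (rule eventually_ball_finite[OF F(1)])
  then obtain K where K: "\<And>k n. k \<ge> K \<Longrightarrow> n \<in> F \<Longrightarrow> \<bar>f k n - g n\<bar> < d2"
    unfolding eventually_sequentially dist_real_def by blast
  have "infsum (\<lambda>n. c n * \<bar>f k n - f j n\<bar>) UNIV \<le> \<epsilon>" if kj: "K \<le> k" "K \<le> j" for k j
  proof (rule infsum_le_finite_sums)
    show "(\<lambda>n. c n * \<bar>f k n - f j n\<bar>) summable_on UNIV"
    proof (rule dom_summable)
      show "(\<lambda>n. (2 * B) * c n) summable_on UNIV" using cs by (rule summable_on_cmult_right)
      fix n
      have "\<bar>f k n - f j n\<bar> \<le> 2 * B" using fb[of k n] fb[of j n] by linarith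
      hence "c n * \<bar>f k n - f j n\<bar> \<le> c n * (2 * B)" using cnn[of n] by (rule mult_left_mono)
      moreover have "\<bar>c n * \<bar>f k n - f j n\<bar>\<bar> = c n * \<bar>f k n - f j n\<bar>" using cnn[of n] by (simp add: abs_mult)
      moreover have "c n * (2 * B) = 2 * B * c n" by (rule mult.commute)
      ultimately show "\<bar>c n * \<bar>f k n - f j n\<bar>\<bar> \<le> 2 * B * c n" by linarith
    qed
    fix G :: "int set" assume G: "finite G" "G \<subseteq> UNIV"
    have split: "sum (\<lambda>n. c n * \<bar>f k n - f j n\<bar>) G
       = sum (\<lambda>n. c n * \<bar>f k n - f j n\<bar>) (G \<inter> F) + sum (\<lambda>n. c n * \<bar>f k n - f j n\<bar>) (G - F)"
      by (rule sum.Int_Diff[OF G(1)])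
    have s1: "sum (\<lambda>n. c n * \<bar>f k n - f j n\<bar>) (G \<inter> F) \<le> sum (\<lambda>n. c n * (2 * d2)) (G \<inter> F)"
    proof (rule sum_mono)
      fix n assume n: "n \<in> G \<inter> F"
      have "\<bar>f k n - f j n\<bar> \<le> 2 * d2" using K[of k n] K[of j n] kj n by auto
      thus "c n * \<bar>f k n - f j n\<bar> \<le> c n * (2 * d2)" using cnn[of n] by (rule mult_left_mono)
    qed
    have "sum c (G \<inter> F) \<le> S" unfolding S_def by (rule sum_le_infsum) (use cs cnn G in auto)
    hence s1': "sum (\<lambda>n. c n * (2 * d2)) (G \<inter> F) \<le> S * (2 * d2)"
      using d2 by (simp add: sum_distrib_right[symmetric])
    have "S * (2 * d2) \<le> \<epsilon> / 2" using S0 e unfolding d2_def by (simp add: field_simps)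
    have s2: "sum (\<lambda>n. c n * \<bar>f k n - f j n\<bar>) (G - F) \<le> sum (\<lambda>n. c n * (2 * B)) (G - F)"
    proof (rule sum_mono)
      fix n
      have "\<bar>f k n - f j n\<bar> \<le> 2 * B" using fb[of k n] fb[of j n] by linarith
      thus "c n * \<bar>f k n - f j n\<bar> \<le> c n * (2 * B)" using cnn[of n] by (rule mult_left_mono)
    qed
    have "sum c ((G - F) \<union> F) \<le> S" unfolding S_def by (rule sum_le_infsum) (use cs cnn G F in auto)
    moreover have "sum c ((G - F) \<union> F) = sum c (G - F) + sum c F"
      by (rule sum.union_disjoint) (use G F in auto)
    moreover have "S - sum c F \<le> d1" using F(2) by (simp add: dist_real_def)
    ultimately have "sum c (G - F) \<le> d1" by linarith
    hence "sum c (G - F) * (2 * B) \<le> d1 * (2 * B)" using B0 by (simp add: mult_right_mono)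
    hence s2': "sum (\<lambda>n. c n * (2 * B)) (G - F) \<le> d1 * (2 * B)"
      by (simp add: sum_distrib_right[symmetric])
    have "d1 * (2 * B) \<le> \<epsilon> / 2" using B0 e unfolding d1_def by (simp add: field_simps)
    show "sum (\<lambda>n. c n * \<bar>f k n - f j n\<bar>) G \<le> \<epsilon>"
      using split s1 s1' s2 s2' \<open>S * (2 * d2) \<le> \<epsilon> / 2\<close> \<open>d1 * (2 * B) \<le> \<epsilon> / 2\<close> by linarith
  qed
  thus ?thesis by blast
qed

definition Pt :: "(int \<Rightarrow> real) \<Rightarrow> (int \<Rightarrow> real) \<Rightarrow> real \<Rightarrow> (int \<Rightarrow> real) \<Rightarrow> (int \<Rightarrow> real) \<Rightarrow> int \<Rightarrow> real" where
  "Pt a b p u v n = a n * \<bar>fdiff u n\<bar> powr (p - 2) * fdiff u n * fdiff v n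
                 + b n * \<bar>u n\<bar> powr (p - 2) * u n * v n"

definition Qt :: "(int \<Rightarrow> real) \<Rightarrow> real \<Rightarrow> real \<Rightarrow> (int \<Rightarrow> real) \<Rightarrow> (int \<Rightarrow> real) \<Rightarrow> int \<Rightarrow> real" where
  "Qt c q r u v n = c n * \<bar>u n\<bar> powr (q - 2) * u n * v n * ln (\<bar>u n\<bar> powr r)"

lemma Ideriv_PQ: "Ideriv a b c p q r u v = infsum (Pt a b p u v) UNIV - infsum (Qt c q r u v) UNIV"
  unfolding Ideriv_def Pt_def Qt_def ..

lemma ev_nonneg: "0 \<le> (x::real) ^ (2 * m)"
  by (simp add: power_mult)

lemma fdiff_sub: "fdiff (\<lambda>n. u n - v n) n = fdiff u n - fdiff v n"
  by (simp add: fdiff_def)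

lemma fdiff_scale: "fdiff (\<lambda>n. s * v n) n = s * fdiff v n"
  by (simp add: fdiff_def algebra_simps)

lemma L_bound:
  assumes s: "s \<ge> 1" and t: "\<bar>t::real\<bar> \<le> B" and r: "r \<ge> 0"
  shows "\<bar>\<bar>t\<bar> powr s * ln (\<bar>t\<bar> powr r)\<bar> \<le> r * (1 + max 1 B powr (s + 1))"
proof (cases "t = 0")
  case True
  have "0 \<le> max 1 B powr (s + 1)" by simp
  thus ?thesis using True r by simp
next
  case False
  have "ln (\<bar>t\<bar> powr r) = r * ln \<bar>t\<bar>" using False by (simp add: ln_powr)
  hence "\<bar>\<bar>t\<bar> powr s * ln (\<bar>t\<bar> powr r)\<bar> = r * (\<bar>t\<bar> powr s * \<bar>ln \<bar>t\<bar>\<bar>)"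
    using r by (simp add: abs_mult)
  also have "\<dots> \<le> r * (1 + max 1 B powr (s + 1))"
    using log_bound[OF s t] r by (rule mult_left_mono)
  finally show ?thesis .
qed

locale setting =
  fixes a b c :: "int \<Rightarrow> real" and p q r b0 :: real and m :: nat
  assumes m: "m > 0" and pm: "p = 2 * real m" and pq: "p < q" and r1: "r \<ge> 1"
    and apos: "\<And>n. a n > 0" and bpos: "\<And>n. b n > 0" and cpos: "\<And>n. c n > 0"
    and b0: "b0 > 0" and bb0: "\<And>n. b n \<ge> b0" and csum: "c summable_on UNIV"
begin

lemma ev_nn: "0 \<le> (x::real) ^ (2 * m)"
  by (simp add: power_mult)

abbreviation "NN u \<equiv> infsum (Eterm a b p u) UNIV"

lemma Eterm_eq: "Eterm a b p u n = a n * (fdiff u n) ^ (2 * m) + b n * (u n) ^ (2 * m)"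
  by (simp add: Eterm_def pm powr_even[OF m])

lemma Eterm_nonneg: "Eterm a b p u n \<ge> 0"
  unfolding Eterm_eq using apos[of n] bpos[of n] ev_nn[of "fdiff u n"] ev_nn[of "u n"]
  by simp

lemma NN_nonneg: "NN u \<ge> 0"
  by (rule infsum_nonneg) (simp add: Eterm_nonneg)

lemma term_le_NN: "inE a b p u \<Longrightarrow> Eterm a b p u n \<le> NN u"
proof -
  assume "inE a b p u"
  hence s: "Eterm a b p u summable_on UNIV" by (simp add: inE_def)
  have "infsum (Eterm a b p u) {n} \<le> NN u"
    by (rule infsum_mono_neutral) (use s Eterm_nonneg in auto)
  thus ?thesis by simp
qed

lemma pt_bound: "inE a b p u \<Longrightarrow> NN u \<le> M \<Longrightarrow> \<bar>u n\<bar> \<le> 1 + M / b0"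
proof -
  assume u: "inE a b p u" and M: "NN u \<le> M"
  have "b0 * (u n) ^ (2 * m) \<le> b n * (u n) ^ (2 * m)"
    using bb0[of n] ev_nn[of "u n"] by (rule mult_right_mono)
  also have "\<dots> \<le> Eterm a b p u n"
    unfolding Eterm_eq using apos[of n] ev_nn[of "fdiff u n"] by simp
  also have "\<dots> \<le> M" using term_le_NN[OF u, of n] M by simp
  finally have "(u n) ^ (2 * m) \<le> M / b0" using b0 by (simp add: field_simps)
  thus ?thesis using abs_le_pow[OF m, of "u n"] by linarith
qed

lemma NN_zero: "inE a b p u \<Longrightarrow> NN u = 0 \<Longrightarrow> u n = 0"
proof -
  assume u: "inE a b p u" and z: "NN u = 0"
  have "b n * (u n) ^ (2 * m) \<le> Eterm a b p u n"
    unfolding Eterm_eq using apos[of n] ev_nn[of "fdiff u n"] by simp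
  also have "\<dots> \<le> 0" using term_le_NN[OF u, of n] z by simp
  finally have "(u n) ^ (2 * m) \<le> 0" using bpos[of n] by (simp add: mult_le_0_iff)
  hence "(u n) ^ (2 * m) = 0" using ev_nn[of "u n"] by linarith
  thus ?thesis by simp
qed

lemma Enorm_NN: "Enorm a b p u = NN u powr (1 / p)"
  by (simp add: Enorm_def)

lemma Enorm_pow: "Enorm a b p u powr p = NN u"
proof -
  have "p > 0" using pm m by simp
  hence "Enorm a b p u powr p = NN u powr 1" by (simp add: Enorm_NN powr_powr)
  thus ?thesis using NN_nonneg[of u] by (simp add: powr_one)
qed

lemma Enorm_nonneg: "Enorm a b p u \<ge> 0"
  by (simp add: Enorm_NN)

lemma Eterm_scale: "Eterm a b p (\<lambda>n. s * v n) n = s ^ (2 * m) * Eterm a b p v n"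
  by (simp add: Eterm_eq fdiff_scale power_mult_distrib algebra_simps)

lemma inE_scale: "inE a b p v \<Longrightarrow> inE a b p (\<lambda>n. s * v n)"
  unfolding inE_def Eterm_scale by (rule summable_on_cmult_right)

lemma NN_scale: "NN (\<lambda>n. s * v n) = s ^ (2 * m) * NN v"
  unfolding Eterm_scale by (rule infsum_cmult_right')

lemma Enorm_scale: "Enorm a b p (\<lambda>n. s * v n) = \<bar>s\<bar> * Enorm a b p v"
proof -
  have pp: "p > 0" using pm m by simp
  have "s ^ (2 * m) = \<bar>s\<bar> powr p" using powr_even[OF m, of s] pm by simp
  hence "Enorm a b p (\<lambda>n. s * v n) = (\<bar>s\<bar> powr p * NN v) powr (1 / p)"
    by (simp add: Enorm_NN NN_scale)
  also have "\<dots> = (\<bar>s\<bar> powr p) powr (1 / p) * NN v powr (1 / p)"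
    using NN_nonneg[of v] by (simp add: powr_mult)
  also have "(\<bar>s\<bar> powr p) powr (1 / p) = \<bar>s\<bar>" using pp by (simp add: powr_powr)
  finally show ?thesis by (simp add: Enorm_NN)
qed

lemma Eterm_sub: "Eterm a b p (\<lambda>n. u n - v n) n \<le> 2 ^ (2 * m) * (Eterm a b p u n + Eterm a b p v n)"
proof -
  have 1: "a n * (fdiff u n - fdiff v n) ^ (2 * m) \<le> a n * (2 ^ (2 * m) * ((fdiff u n) ^ (2 * m) + (fdiff v n) ^ (2 * m)))"
    using sub_pow apos[of n] by (simp add: mult_left_mono)
  have 2: "b n * (u n - v n) ^ (2 * m) \<le> b n * (2 ^ (2 * m) * ((u n) ^ (2 * m) + (v n) ^ (2 * m)))"
    using sub_pow bpos[of n] by (simp add: mult_left_mono)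
  show ?thesis unfolding Eterm_eq fdiff_sub using 1 2 by (simp add: algebra_simps)
qed

lemma inE_sub: "inE a b p u \<Longrightarrow> inE a b p v \<Longrightarrow> inE a b p (\<lambda>n. u n - v n)"
  unfolding inE_def
  by (rule summable_on_comparison_test[of "\<lambda>n. 2 ^ (2 * m) * (Eterm a b p u n + Eterm a b p v n)"])
     (auto intro!: summable_on_cmult_right summable_on_add simp: Eterm_sub Eterm_nonneg)

lemma NN_sub: "inE a b p u \<Longrightarrow> inE a b p v \<Longrightarrow> NN (\<lambda>n. u n - v n) \<le> 2 ^ (2 * m) * (NN u + NN v)"
proof -
  assume u: "inE a b p u" and v: "inE a b p v"
  have "NN (\<lambda>n. u n - v n) \<le> infsum (\<lambda>n. 2 ^ (2 * m) * (Eterm a b p u n + Eterm a b p v n)) UNIV"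
    by (rule infsum_mono) (use inE_sub[OF u v] u v in \<open>auto intro!: summable_on_cmult_right summable_on_add simp: Eterm_sub inE_def\<close>)
  also have "\<dots> = 2 ^ (2 * m) * (NN u + NN v)"
    using u v by (simp add: infsum_cmult_right' infsum_add inE_def)
  finally show ?thesis .
qed

lemma cdom_summable: "(\<And>n. \<bar>g n\<bar> \<le> K * c n) \<Longrightarrow> g summable_on UNIV"
  by (rule dom_summable[of "\<lambda>n. K * c n"]) (auto intro: summable_on_cmult_right csum)

lemma logterm_summable: "(\<And>n. \<bar>u n\<bar> \<le> B) \<Longrightarrow> logterm c q r u summable_on UNIV"
proof (rule cdom_summable)
  fix n assume B: "\<And>n. \<bar>u n\<bar> \<le> B"
  have q1: "q \<ge> 1" using pq pm m by simp
  have "\<bar>\<bar>u n\<bar> powr q * ln (\<bar>u n\<bar> powr r)\<bar> \<le> r * (1 + max 1 B powr (q + 1))"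
    using L_bound[OF q1 B, of r] r1 by simp
  hence "c n * \<bar>\<bar>u n\<bar> powr q * ln (\<bar>u n\<bar> powr r)\<bar> \<le> c n * (r * (1 + max 1 B powr (q + 1)))"
    using cpos[of n] by (simp add: mult_left_mono)
  thus "\<bar>logterm c q r u n\<bar> \<le> (r * (1 + max 1 B powr (q + 1))) * c n"
    using cpos[of n] by (simp add: logterm_def abs_mult mult_ac)
qed

lemma inD_iff: "inD a b c p q r u \<longleftrightarrow> inE a b p u"
proof
  assume "inE a b p u"
  moreover have "\<And>n. \<bar>u n\<bar> \<le> 1 + NN u / b0" using pt_bound[OF \<open>inE a b p u\<close>] by simp
  ultimately show "inD a b c p q r u" unfolding inD_def using logterm_summable by blast
qed (simp add: inD_def)

end

context setting begin

lemma phi': "\<bar>t\<bar> powr (p - 2) * t = t ^ (2 * m - 1)"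
  using phi_eq[OF m, of t] pm by simp

lemma pow_succ: "(x::real) ^ (2 * m - 1) * x = x ^ (2 * m)"
proof -
  have "Suc (2 * m - 1) = 2 * m" using m by simp
  thus ?thesis using power_Suc2[of x "2 * m - 1"] by simp
qed

lemma Pt_eq: "Pt a b p u v n = a n * (fdiff u n) ^ (2 * m - 1) * fdiff v n + b n * (u n) ^ (2 * m - 1) * v n"
  unfolding Pt_def by (simp only: mult.assoc phi'[symmetric])

lemma Pt_summable: "inE a b p u \<Longrightarrow> inE a b p v \<Longrightarrow> Pt a b p u v summable_on UNIV"
proof (rule dom_summable[of "\<lambda>n. Eterm a b p u n + Eterm a b p v n"])
  assume "inE a b p u" "inE a b p v"
  thus "(\<lambda>n. Eterm a b p u n + Eterm a b p v n) summable_on UNIV"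
    by (intro summable_on_add) (auto simp: inE_def)
next
  fix n
  have 1: "\<bar>(fdiff u n) ^ (2 * m - 1) * fdiff v n\<bar> \<le> (fdiff u n) ^ (2 * m) + (fdiff v n) ^ (2 * m)"
    by (rule young_pow[OF m])
  have 2: "\<bar>(u n) ^ (2 * m - 1) * v n\<bar> \<le> (u n) ^ (2 * m) + (v n) ^ (2 * m)"
    by (rule young_pow[OF m])
  have "\<bar>Pt a b p u v n\<bar> \<le> a n * \<bar>(fdiff u n) ^ (2 * m - 1) * fdiff v n\<bar> + b n * \<bar>(u n) ^ (2 * m - 1) * v n\<bar>"
  proof -
    have "\<bar>Pt a b p u v n\<bar> \<le> \<bar>a n * ((fdiff u n) ^ (2 * m - 1) * fdiff v n)\<bar> + \<bar>b n * ((u n) ^ (2 * m - 1) * v n)\<bar>"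
      unfolding Pt_eq mult.assoc by (rule abs_triangle_ineq)
    thus ?thesis using apos[of n] bpos[of n] by (simp only: abs_mult abs_of_pos)
  qed
  also have "\<dots> \<le> a n * ((fdiff u n) ^ (2 * m) + (fdiff v n) ^ (2 * m)) + b n * ((u n) ^ (2 * m) + (v n) ^ (2 * m))"
    using 1 2 apos[of n] bpos[of n] by (intro add_mono mult_left_mono) auto
  also have "\<dots> = Eterm a b p u n + Eterm a b p v n" by (simp add: Eterm_eq algebra_simps)
  finally show "\<bar>Pt a b p u v n\<bar> \<le> Eterm a b p u n + Eterm a b p v n" .
qed

lemma Qt_bound:
  assumes B: "\<bar>u n\<bar> \<le> B"
  shows "\<bar>Qt c q r u v n\<bar> \<le> (r * (1 + max 1 B powr q)) * (c n * \<bar>v n\<bar>)"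
proof -
  have q1: "q - 1 \<ge> 1" using pq pm m by simp
  define L where "L = ln (\<bar>u n\<bar> powr r)"
  have e: "Qt c q r u v n = c n * v n * (\<bar>u n\<bar> powr (q - 2) * u n * L)"
    by (simp add: Qt_def L_def mult_ac)
  have "\<bar>\<bar>u n\<bar> powr (q - 2) * u n * L\<bar> = \<bar>\<bar>u n\<bar> powr (q - 1) * L\<bar>"
  proof (cases "u n = 0")
    case True thus ?thesis by simp
  next
    case False
    have "\<bar>u n\<bar> powr (q - 1) = \<bar>u n\<bar> powr ((q - 2) + 1)" by simp
    also have "\<dots> = \<bar>u n\<bar> powr (q - 2) * \<bar>u n\<bar> powr 1" by (rule powr_add)
    also have "\<dots> = \<bar>u n\<bar> powr (q - 2) * \<bar>u n\<bar>" by simp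
    finally show ?thesis by (simp add: abs_mult)
  qed
  also have "\<dots> \<le> r * (1 + max 1 B powr (q - 1 + 1))"
    unfolding L_def by (rule L_bound[OF q1 B]) (use r1 in simp)
  finally have "\<bar>\<bar>u n\<bar> powr (q - 2) * u n * L\<bar> \<le> r * (1 + max 1 B powr q)" by simp
  hence "\<bar>c n * v n\<bar> * \<bar>\<bar>u n\<bar> powr (q - 2) * u n * L\<bar> \<le> \<bar>c n * v n\<bar> * (r * (1 + max 1 B powr q))"
    by (rule mult_left_mono) simp
  thus ?thesis unfolding e using cpos[of n] by (simp add: abs_mult mult_ac)
qed

lemma Qt_summable: "(\<And>n. \<bar>u n\<bar> \<le> B) \<Longrightarrow> (\<And>n. \<bar>v n\<bar> \<le> B') \<Longrightarrow> Qt c q r u v summable_on UNIV"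
proof (rule cdom_summable)
  fix n assume B: "\<And>n. \<bar>u n\<bar> \<le> B" and B': "\<And>n. \<bar>v n\<bar> \<le> B'"
  have "\<bar>Qt c q r u v n\<bar> \<le> (r * (1 + max 1 B powr q)) * (c n * \<bar>v n\<bar>)" by (rule Qt_bound[OF B])
  also have "\<dots> \<le> (r * (1 + max 1 B powr q)) * (c n * B')"
  proof (rule mult_left_mono)
    show "c n * \<bar>v n\<bar> \<le> c n * B'" using B'[of n] cpos[of n] by (simp add: mult_left_mono)
    have "0 \<le> max 1 B powr q" by simp
    thus "0 \<le> r * (1 + max 1 B powr q)" using r1 by simp
  qed
  finally show "\<bar>Qt c q r u v n\<bar> \<le> (r * (1 + max 1 B powr q) * B') * c n" by (simp add: mult_ac)
qed

lemma Ideriv_scale: "Ideriv a b c p q r u (\<lambda>n. s * v n) = s * Ideriv a b c p q r u v"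
proof -
  have 1: "Pt a b p u (\<lambda>n. s * v n) = (\<lambda>n. s * Pt a b p u v n)"
    by (rule ext) (simp add: Pt_def fdiff_scale algebra_simps)
  have 2: "Qt c q r u (\<lambda>n. s * v n) = (\<lambda>n. s * Qt c q r u v n)"
    by (rule ext) (simp add: Qt_def algebra_simps)
  show ?thesis unfolding Ideriv_PQ 1 2 infsum_cmult_right' by (simp add: algebra_simps)
qed

lemma Ideriv_zero: "Ideriv a b c p q r u (\<lambda>n. 0) = 0"
  using Ideriv_scale[of u 0 "\<lambda>n. 0"] by simp

lemma Ideriv_self: "Ideriv a b c p q r u u = NN u - infsum (logterm c q r u) UNIV"
proof -
  have 1: "Pt a b p u u = Eterm a b p u"
    by (rule ext) (simp only: Pt_eq Eterm_eq mult.assoc pow_succ)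
  have 2: "Qt c q r u u = logterm c q r u"
  proof (rule ext)
    fix n
    have "\<bar>u n\<bar> powr (q - 2) * u n * u n = \<bar>u n\<bar> powr q"
    proof (cases "u n = 0")
      case True thus ?thesis using pq pm m by simp
    next
      case False
      have "\<bar>u n\<bar> powr 2 = \<bar>u n\<bar> ^ 2" using False by (subst powr_numeral) auto
      hence "u n * u n = \<bar>u n\<bar> powr 2" by (simp add: power2_eq_square)
      hence "\<bar>u n\<bar> powr (q - 2) * u n * u n = \<bar>u n\<bar> powr (q - 2) * \<bar>u n\<bar> powr 2" by (simp add: mult.assoc)
      also have "\<dots> = \<bar>u n\<bar> powr ((q - 2) + 2)" by (rule powr_add[symmetric])
      also have "\<dots> = \<bar>u n\<bar> powr q" by simp
      finally show ?thesis .
    qed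
    moreover have "c n * \<bar>u n\<bar> powr (q - 2) * u n * u n * ln (\<bar>u n\<bar> powr r)
       = c n * (\<bar>u n\<bar> powr (q - 2) * u n * u n) * ln (\<bar>u n\<bar> powr r)" by (simp only: mult.assoc)
    ultimately show "Qt c q r u u n = logterm c q r u n" unfolding Qt_def logterm_def by simp
  qed
  show ?thesis unfolding Ideriv_PQ 1 2 ..
qed

lemma Ifun_bound: "(1 / p - 1 / q) * NN u \<le> Ifun a b c p q r u - (1 / q) * Ideriv a b c p q r u u"
proof -
  have S: "0 \<le> infsum (\<lambda>n. c n * \<bar>u n\<bar> powr q) UNIV"
    by (rule infsum_nonneg) (use cpos in \<open>simp add: less_imp_le\<close>)
  have rq: "0 \<le> r / q\<^sup>2" using r1 by simp
  have "Ifun a b c p q r u - (1 / q) * Ideriv a b c p q r u u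
     = (1 / p - 1 / q) * NN u + (r / q\<^sup>2) * infsum (\<lambda>n. c n * \<bar>u n\<bar> powr q) UNIV"
    unfolding Ifun_def Enorm_pow Ideriv_self by (simp add: algebra_simps)
  thus ?thesis using mult_nonneg_nonneg[OF rq S] by linarith
qed

lemma inE_zero: "inE a b p (\<lambda>n. 0)"
proof -
  have "Eterm a b p (\<lambda>n. 0) = (\<lambda>n. 0)" by (rule ext) (use m in \<open>simp add: Eterm_eq fdiff_def power_0_left\<close>)
  thus ?thesis unfolding inE_def by simp
qed

lemma Enorm_zero: "Enorm a b p (\<lambda>n. 0) = 0"
proof -
  have "Eterm a b p (\<lambda>n. 0) = (\<lambda>n. 0)" by (rule ext) (use m in \<open>simp add: Eterm_eq fdiff_def power_0_left\<close>)
  thus ?thesis by (simp add: Enorm_NN)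
qed

lemma dn_upper: "inD a b c p q r v \<Longrightarrow> Enorm a b p v \<le> 1 \<Longrightarrow> ereal \<bar>Ideriv a b c p q r u v\<bar> \<le> dualnorm a b c p q r u"
  unfolding dualnorm_def by (rule SUP_upper) simp

lemma dn_nonneg: "0 \<le> dualnorm a b c p q r u"
  using dn_upper[of "\<lambda>n. 0" u] inE_zero Enorm_zero Ideriv_zero by (simp add: inD_iff flip: zero_ereal_def)

lemma dn_bound:
  assumes w: "inE a b p w"
  shows "ereal \<bar>Ideriv a b c p q r u w\<bar> \<le> ereal (Enorm a b p w) * dualnorm a b c p q r u"
proof (cases "Enorm a b p w = 0")
  case True
  hence "NN w = 0" by (simp add: Enorm_NN)
  hence "w = (\<lambda>n. 0)" using NN_zero[OF w] by auto
  thus ?thesis using True by (simp add: Ideriv_zero flip: zero_ereal_def)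
next
  case False
  define s where "s = Enorm a b p w"
  have s: "s > 0" using False Enorm_nonneg[of w] by (simp add: s_def)
  define v where "v = (\<lambda>n. (1 / s) * w n)"
  have v: "inE a b p v" unfolding v_def by (rule inE_scale[OF w])
  have nv: "Enorm a b p v = 1" unfolding v_def Enorm_scale using s by (simp add: s_def)
  have wv: "w = (\<lambda>n. s * v n)" using s by (simp add: v_def)
  have "ereal \<bar>Ideriv a b c p q r u w\<bar> = ereal s * ereal \<bar>Ideriv a b c p q r u v\<bar>"
    unfolding wv Ideriv_scale using s by (simp add: abs_mult)
  also have "\<dots> \<le> ereal s * dualnorm a b c p q r u"
    by (rule ereal_mult_left_mono) (use dn_upper[of v u] v nv s in \<open>auto simp: inD_iff\<close>)
  finally show ?thesis by (simp add: s_def)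
qed

end

context setting begin

lemma key:
  assumes u: "inE a b p u" and v: "inE a b p v" and Bu: "\<And>n. \<bar>u n\<bar> \<le> B" and Bv: "\<And>n. \<bar>v n\<bar> \<le> B"
  shows "NN (\<lambda>n. u n - v n) \<le> 2 ^ (2 * m - 1) * (\<bar>Ideriv a b c p q r u (\<lambda>n. u n - v n)\<bar>
           + \<bar>Ideriv a b c p q r v (\<lambda>n. u n - v n)\<bar>
           + 2 * (r * (1 + max 1 B powr q)) * infsum (\<lambda>n. c n * \<bar>u n - v n\<bar>) UNIV)"
proof -
  define d where "d = (\<lambda>n. u n - v n)"
  define G where "G = r * (1 + max 1 B powr q)"
  define S where "S = infsum (\<lambda>n. c n * \<bar>d n\<bar>) UNIV"
  define k where "k = (2::real) ^ (2 * m - 1)"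
  have kp: "k > 0" by (simp add: k_def)
  have G0: "G \<ge> 0" unfolding G_def using r1 by (simp add: add_nonneg_nonneg)
  have dE: "inE a b p d" unfolding d_def by (rule inE_sub[OF u v])
  have Bd: "\<bar>d n\<bar> \<le> 2 * B" for n unfolding d_def using Bu[of n] Bv[of n] by linarith
  have sPu: "Pt a b p u d summable_on UNIV" by (rule Pt_summable[OF u dE])
  have sPv: "Pt a b p v d summable_on UNIV" by (rule Pt_summable[OF v dE])
  have sQu: "Qt c q r u d summable_on UNIV" by (rule Qt_summable[OF Bu Bd])
  have sQv: "Qt c q r v d summable_on UNIV" by (rule Qt_summable[OF Bv Bd])
  have scd: "(\<lambda>n. c n * \<bar>d n\<bar>) summable_on UNIV"
  proof (rule cdom_summable)
    fix n show "\<bar>c n * \<bar>d n\<bar>\<bar> \<le> 2 * B * c n"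
      using Bd[of n] cpos[of n] by (simp add: abs_mult mult.commute mult_left_mono)
  qed
  have sGcd: "(\<lambda>n. G * (c n * \<bar>d n\<bar>)) summable_on UNIV" using scd by (rule summable_on_cmult_right)
  have Qb: "\<bar>infsum (Qt c q r w d) UNIV\<bar> \<le> G * S"
    if sQ: "Qt c q r w d summable_on UNIV" and Bw: "\<And>n. \<bar>w n\<bar> \<le> B" for w
  proof -
    have pt: "\<bar>Qt c q r w d n\<bar> \<le> G * (c n * \<bar>d n\<bar>)" for n
      unfolding G_def by (rule Qt_bound[OF Bw])
    have "infsum (Qt c q r w d) UNIV \<le> infsum (\<lambda>n. G * (c n * \<bar>d n\<bar>)) UNIV"
      by (rule infsum_mono[OF sQ sGcd]) (use pt in \<open>simp add: abs_le_iff\<close>)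
    moreover have "infsum (\<lambda>n. - (G * (c n * \<bar>d n\<bar>))) UNIV \<le> infsum (Qt c q r w d) UNIV"
    proof (rule infsum_mono[OF _ sQ])
      show "(\<lambda>n. - (G * (c n * \<bar>d n\<bar>))) summable_on UNIV" using sGcd by (simp add: summable_on_uminus)
      fix n show "- (G * (c n * \<bar>d n\<bar>)) \<le> Qt c q r w d n"
        using pt[of n] abs_le_iff[of "Qt c q r w d n"] by linarith
    qed
    moreover have "infsum (\<lambda>n. G * (c n * \<bar>d n\<bar>)) UNIV = G * S"
      unfolding S_def by (rule infsum_cmult_right')
    ultimately show ?thesis by (simp add: infsum_uminus abs_le_iff)
  qed
  have QU: "\<bar>infsum (Qt c q r u d) UNIV\<bar> \<le> G * S" by (rule Qb[OF sQu Bu])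
  have QV: "\<bar>infsum (Qt c q r v d) UNIV\<bar> \<le> G * S" by (rule Qb[OF sQv Bv])
  have pw: "(1 / k) * Eterm a b p d n \<le> Pt a b p u d n - Pt a b p v d n" for n
  proof -
    have fd: "fdiff d n = fdiff u n - fdiff v n" unfolding d_def by (rule fdiff_sub)
    have m1: "(fdiff u n - fdiff v n) ^ (2 * m) / k \<le> ((fdiff u n) ^ (2 * m - 1) - (fdiff v n) ^ (2 * m - 1)) * (fdiff u n - fdiff v n)"
      unfolding k_def by (rule mono_pow[OF m])
    have m2: "(u n - v n) ^ (2 * m) / k \<le> ((u n) ^ (2 * m - 1) - (v n) ^ (2 * m - 1)) * (u n - v n)"
      unfolding k_def by (rule mono_pow[OF m])
    have "a n * ((fdiff u n - fdiff v n) ^ (2 * m) / k) \<le> a n * (((fdiff u n) ^ (2 * m - 1) - (fdiff v n) ^ (2 * m - 1)) * (fdiff u n - fdiff v n))"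
      by (rule mult_left_mono[OF m1]) (use apos[of n] in simp)
    moreover have "b n * ((u n - v n) ^ (2 * m) / k) \<le> b n * (((u n) ^ (2 * m - 1) - (v n) ^ (2 * m - 1)) * (u n - v n))"
      by (rule mult_left_mono[OF m2]) (use bpos[of n] in simp)
    moreover have "(1 / k) * Eterm a b p d n = a n * ((fdiff u n - fdiff v n) ^ (2 * m) / k) + b n * ((u n - v n) ^ (2 * m) / k)"
      unfolding Eterm_eq fd by (simp add: d_def algebra_simps)
    moreover have "Pt a b p u d n - Pt a b p v d n = a n * (((fdiff u n) ^ (2 * m - 1) - (fdiff v n) ^ (2 * m - 1)) * (fdiff u n - fdiff v n))
        + b n * (((u n) ^ (2 * m - 1) - (v n) ^ (2 * m - 1)) * (u n - v n))"
      unfolding Pt_eq fd by (simp add: d_def algebra_simps)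
    ultimately show ?thesis by linarith
  qed
  have "(1 / k) * NN d = infsum (\<lambda>n. (1 / k) * Eterm a b p d n) UNIV"
    by (rule infsum_cmult_right'[symmetric])
  also have "\<dots> \<le> infsum (\<lambda>n. Pt a b p u d n - Pt a b p v d n) UNIV"
  proof (rule infsum_mono)
    show "(\<lambda>n. 1 / k * Eterm a b p d n) summable_on UNIV"
      using dE unfolding inE_def by (rule summable_on_cmult_right)
    show "(\<lambda>n. Pt a b p u d n - Pt a b p v d n) summable_on UNIV"
      using sPu sPv summable_on_add[OF sPu, of "\<lambda>n. - Pt a b p v d n"]
      by (simp add: summable_on_uminus)
  qed (rule pw)
  also have "\<dots> = infsum (Pt a b p u d) UNIV - infsum (Pt a b p v d) UNIV"
    by (rule infsum_diff_real[OF sPu sPv])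
  also have "\<dots> = (Ideriv a b c p q r u d + infsum (Qt c q r u d) UNIV) - (Ideriv a b c p q r v d + infsum (Qt c q r v d) UNIV)"
    by (simp add: Ideriv_PQ)
  also have "\<dots> \<le> \<bar>Ideriv a b c p q r u d\<bar> + \<bar>Ideriv a b c p q r v d\<bar> + 2 * G * S"
    using QU QV abs_ge_self[of "Ideriv a b c p q r u d"] abs_ge_minus_self[of "Ideriv a b c p q r v d"]
      abs_le_iff[of "infsum (Qt c q r u d) UNIV"] abs_le_iff[of "infsum (Qt c q r v d) UNIV"] by linarith
  finally have "(1 / k) * NN d \<le> \<bar>Ideriv a b c p q r u d\<bar> + \<bar>Ideriv a b c p q r v d\<bar> + 2 * G * S" .
  hence "NN d \<le> k * (\<bar>Ideriv a b c p q r u d\<bar> + \<bar>Ideriv a b c p q r v d\<bar> + 2 * G * S)"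
    using kp by (simp add: field_simps)
  thus ?thesis unfolding d_def G_def S_def k_def by simp
qed

end

theorem lemma4p2:
  fixes p q r d0 :: real and a b c :: "int \<Rightarrow> real" and u :: "nat \<Rightarrow> int \<Rightarrow> real"
  assumes "1 < p" and "p < q" and "\<exists>m::nat. m > 0 \<and> p / 2 = real m" and "r \<ge> 1"
    and "\<forall>n. a n > 0" and "\<forall>n. b n > 0" and "\<forall>n. c n > 0"
    and C1: "\<exists>b0>0. \<forall>n. b n \<ge> b0" "\<forall>M. \<exists>N. \<forall>n. \<bar>n\<bar> \<ge> N \<longrightarrow> b n \<ge> M"
    and C2: "\<exists>c0>0. \<forall>n. c n \<le> c0" "c summable_on UNIV"
    and "d0 > 0"
    and "\<forall>k. inD a b c p q r (u k)"
    and "(\<lambda>k. Ifun a b c p q r (u k)) \<longlonglongrightarrow> d0"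
    and "(\<lambda>k. dualnorm a b c p q r (u k) * ereal (1 + Enorm a b p (u k))) \<longlonglongrightarrow> 0"
  shows "\<exists>\<phi> w. strict_mono \<phi> \<and> inD a b c p q r w \<and>
           (\<lambda>k. Enorm a b p (\<lambda>n. u (\<phi> k) n - w n)) \<longlonglongrightarrow> 0"
proof -
  obtain m :: nat where m: "m > 0" "p / 2 = real m" using assms(3) by blast
  have pm: "p = 2 * real m" using m(2) by simp
  obtain b0 where b0: "b0 > 0" "\<forall>n. b n \<ge> b0" using C1(1) by blast
  interpret S: setting a b c p q r b0 m
    by unfold_locales (use m pm b0 assms(2,4,5,6,7) C2(2) in auto)
  have pp: "p > 0" using assms(1) by simp
  have qp: "q > 0" using assms(1,2) by simp
  define s where "s k = Enorm a b p (u k)" for k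
  have s0: "s k \<ge> 0" for k unfolding s_def by (rule S.Enorm_nonneg)
  define e where "e k = dualnorm a b c p q r (u k) * ereal (1 + s k)" for k
  have "e = (\<lambda>k. dualnorm a b c p q r (u k) * ereal (1 + Enorm a b p (u k)))"
    by (simp add: fun_eq_iff e_def s_def)
  hence e0: "e \<longlonglongrightarrow> 0" using assms(15) by simp
  have uE: "inE a b p (u k)" for k using assms(13) S.inD_iff by blast
  have dn_e: "dualnorm a b c p q r (u k) \<le> e k" for k
  proof -
    have "dualnorm a b c p q r (u k) * 1 \<le> dualnorm a b c p q r (u k) * ereal (1 + s k)"
      by (rule ereal_mult_left_mono) (use s0[of k] S.dn_nonneg in \<open>auto simp: one_ereal_def\<close>)
    thus ?thesis by (simp add: e_def)
  qed
  have small: "\<exists>k0. \<forall>k\<ge>k0. \<forall>w. inE a b p w \<longrightarrow> \<bar>Ideriv a b c p q r (u k) w\<bar> * (1 + s k) \<le> \<epsilon> * Enorm a b p w"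
    if eps: "\<epsilon> > 0" for \<epsilon>
  proof -
    have "eventually (\<lambda>k. e k < ereal \<epsilon>) sequentially"
      by (rule order_tendstoD(2)[OF e0]) (use eps in simp)
    then obtain k0 where k0: "\<And>k. k \<ge> k0 \<Longrightarrow> e k < ereal \<epsilon>" unfolding eventually_sequentially by blast
    have "\<bar>Ideriv a b c p q r (u k) w\<bar> * (1 + s k) \<le> \<epsilon> * Enorm a b p w"
      if k: "k \<ge> k0" and w: "inE a b p w" for k w
    proof -
      have "ereal (\<bar>Ideriv a b c p q r (u k) w\<bar> * (1 + s k)) = ereal \<bar>Ideriv a b c p q r (u k) w\<bar> * ereal (1 + s k)"
        by simp
      also have "\<dots> \<le> (ereal (Enorm a b p w) * dualnorm a b c p q r (u k)) * ereal (1 + s k)"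
        by (rule ereal_mult_right_mono[OF S.dn_bound[OF w]]) (use s0[of k] in simp)
      also have "\<dots> = ereal (Enorm a b p w) * e k" by (simp add: e_def mult.assoc)
      also have "\<dots> \<le> ereal (Enorm a b p w) * ereal \<epsilon>"
        by (rule ereal_mult_left_mono) (use k0[OF k] S.Enorm_nonneg[of w] in auto)
      also have "\<dots> = ereal (\<epsilon> * Enorm a b p w)" by (simp add: mult.commute)
      finally show ?thesis by simp
    qed
    thus ?thesis by blast
  qed
  have Id0: "(\<lambda>k. Ideriv a b c p q r (u k) (u k)) \<longlonglongrightarrow> 0"
  proof (rule LIMSEQ_I)
    fix \<epsilon> :: real assume eps: "\<epsilon> > 0"
    obtain k0 where k0: "\<And>k w. k \<ge> k0 \<Longrightarrow> inE a b p w \<Longrightarrow> \<bar>Ideriv a b c p q r (u k) w\<bar> * (1 + s k) \<le> (\<epsilon> / 2) * Enorm a b p w"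
      using small[of "\<epsilon> / 2"] eps by auto
    have "norm (Ideriv a b c p q r (u k) (u k) - 0) < \<epsilon>" if k: "k \<ge> k0" for k
    proof -
      have "\<bar>Ideriv a b c p q r (u k) (u k)\<bar> * (1 + s k) \<le> (\<epsilon> / 2) * s k"
        using k0[OF k uE[of k]] by (simp add: s_def)
      also have "\<dots> \<le> (\<epsilon> / 2) * (1 + s k)" using eps by simp
      finally have "\<bar>Ideriv a b c p q r (u k) (u k)\<bar> \<le> \<epsilon> / 2"
        using s0[of k] by (simp add: mult_le_cancel_right)
      thus ?thesis using eps by simp
    qed
    thus "\<exists>no. \<forall>k\<ge>no. norm (Ideriv a b c p q r (u k) (u k) - 0) < \<epsilon>" by blast
  qed
  obtain K1 where K1: "\<And>k. norm (Ifun a b c p q r (u k)) \<le> K1"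
    using convergent_imp_Bseq[of "\<lambda>k. Ifun a b c p q r (u k)"] assms(14) BseqE
    unfolding convergent_def by metis
  obtain K2 where K2: "\<And>k. norm (Ideriv a b c p q r (u k) (u k)) \<le> K2"
    using convergent_imp_Bseq[of "\<lambda>k. Ideriv a b c p q r (u k) (u k)"] Id0 BseqE
    unfolding convergent_def by metis
  define M where "M = (K1 + K2 / q) / (1 / p - 1 / q)"
  have pq': "1 / p - 1 / q > 0" using pp assms(2) by (simp add: frac_less2)
  have NNb: "infsum (Eterm a b p (u k)) UNIV \<le> M" for k
  proof -
    have "(1 / p - 1 / q) * infsum (Eterm a b p (u k)) UNIV \<le> Ifun a b c p q r (u k) - (1 / q) * Ideriv a b c p q r (u k) (u k)"
      by (rule S.Ifun_bound)
    also have "\<dots> \<le> K1 + K2 / q"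
    proof -
      have "\<bar>(1 / q) * Ideriv a b c p q r (u k) (u k)\<bar> \<le> K2 / q"
        using K2[of k] qp by (simp add: abs_mult divide_right_mono)
      moreover have "\<bar>Ifun a b c p q r (u k)\<bar> \<le> K1" using K1[of k] by simp
      ultimately show ?thesis
        using abs_le_iff[of "(1 / q) * Ideriv a b c p q r (u k) (u k)" "K2 / q"]
          abs_le_iff[of "Ifun a b c p q r (u k)" K1] by linarith
    qed
    finally show ?thesis unfolding M_def using pq' by (simp add: field_simps)
  qed
  define B where "B = 1 + M / b0"
  have ubd: "\<bar>u k n\<bar> \<le> B" for k n unfolding B_def by (rule S.pt_bound[OF uE NNb])
  obtain \<phi> w0 where phi: "strict_mono \<phi>" and lim: "\<And>n. (\<lambda>k. u (\<phi> k) n) \<longlonglongrightarrow> w0 n"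
    and w0b: "\<And>n. \<bar>w0 n\<bar> \<le> B"
    using subseq_pointwise[of u B] ubd by blast
  define Cn where "Cn = (2 ^ (2 * m) * (2 * M)) powr (1 / p)"
  have Cn0: "Cn \<ge> 0" by (simp add: Cn_def)
  have Enb: "Enorm a b p (\<lambda>n. u i n - u j n) \<le> Cn" for i j
  proof -
    have "infsum (Eterm a b p (\<lambda>n. u i n - u j n)) UNIV \<le> 2 ^ (2 * m) * (infsum (Eterm a b p (u i)) UNIV + infsum (Eterm a b p (u j)) UNIV)"
      by (rule S.NN_sub[OF uE uE])
    also have "\<dots> \<le> 2 ^ (2 * m) * (2 * M)" using NNb[of i] NNb[of j] by simp
    finally have X: "infsum (Eterm a b p (\<lambda>n. u i n - u j n)) UNIV \<le> 2 ^ (2 * m) * (2 * M)" .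
    show ?thesis unfolding Cn_def S.Enorm_NN
      by (rule powr_mono2[OF _ _ X]) (use pp S.NN_nonneg in auto)
  qed
  define G where "G = r * (1 + max 1 B powr q)"
  have G0: "G \<ge> 0" unfolding G_def using assms(4) by (simp add: add_nonneg_nonneg)
  have cnn: "\<And>n. c n \<ge> 0" using assms(7) by (simp add: less_imp_le)
  have cauchy: "\<exists>K. \<forall>i j. K \<le> i \<longrightarrow> K \<le> j \<longrightarrow> infsum (Eterm a b p (\<lambda>n. u (\<phi> i) n - u (\<phi> j) n)) UNIV \<le> \<epsilon>"
    if eps: "\<epsilon> > 0" for \<epsilon>
  proof -
    define k2 where "k2 = (2::real) ^ (2 * m - 1)"
    have k2: "k2 > 0" by (simp add: k2_def)
    define e1 where "e1 = \<epsilon> / (3 * k2)"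
    have e1: "e1 > 0" using eps k2 by (simp add: e1_def)
    obtain k0 where k0: "\<And>k w. k \<ge> k0 \<Longrightarrow> inE a b p w \<Longrightarrow> \<bar>Ideriv a b c p q r (u k) w\<bar> * (1 + s k) \<le> (e1 / (Cn + 1)) * Enorm a b p w"
      using small[of "e1 / (Cn + 1)"] e1 Cn0 by auto
    have Isb: "\<bar>Ideriv a b c p q r (u k) (\<lambda>n. u i n - u j n)\<bar> \<le> e1" if k: "k \<ge> k0" for k i j
    proof -
      have wE: "inE a b p (\<lambda>n. u i n - u j n)" by (rule S.inE_sub[OF uE uE])
      have "\<bar>Ideriv a b c p q r (u k) (\<lambda>n. u i n - u j n)\<bar> \<le> \<bar>Ideriv a b c p q r (u k) (\<lambda>n. u i n - u j n)\<bar> * (1 + s k)"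
        using s0[of k] by (simp add: mult_le_cancel_left1 algebra_simps)
      also have "\<dots> \<le> (e1 / (Cn + 1)) * Enorm a b p (\<lambda>n. u i n - u j n)" by (rule k0[OF k wE])
      also have "\<dots> \<le> (e1 / (Cn + 1)) * Cn" by (rule mult_left_mono[OF Enb]) (use e1 Cn0 in simp)
      also have "\<dots> \<le> e1" using e1 Cn0 by (simp add: field_simps)
      finally show ?thesis .
    qed
    have "\<exists>K1. \<forall>i j. K1 \<le> i \<longrightarrow> K1 \<le> j \<longrightarrow> infsum (\<lambda>n. c n * \<bar>u (\<phi> i) n - u (\<phi> j) n\<bar>) UNIV \<le> e1 / (2 * G + 1)"
      by (rule tail_cauchy[of c "\<lambda>k. u (\<phi> k)" B w0]) (use cnn C2(2) ubd lim e1 G0 in auto)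
    then obtain K1 where K1: "\<And>i j. K1 \<le> i \<Longrightarrow> K1 \<le> j \<Longrightarrow> infsum (\<lambda>n. c n * \<bar>u (\<phi> i) n - u (\<phi> j) n\<bar>) UNIV \<le> e1 / (2 * G + 1)"
      by blast
    have "infsum (Eterm a b p (\<lambda>n. u (\<phi> i) n - u (\<phi> j) n)) UNIV \<le> \<epsilon>"
      if ij: "max k0 K1 \<le> i" "max k0 K1 \<le> j" for i j
    proof -
      have pi: "\<phi> i \<ge> k0" "\<phi> j \<ge> k0" using seq_suble[OF phi, of i] seq_suble[OF phi, of j] ij by auto
      have T: "infsum (\<lambda>n. c n * \<bar>u (\<phi> i) n - u (\<phi> j) n\<bar>) UNIV \<le> e1 / (2 * G + 1)" using K1 ij by auto
      have "2 * G * infsum (\<lambda>n. c n * \<bar>u (\<phi> i) n - u (\<phi> j) n\<bar>) UNIV \<le> 2 * G * (e1 / (2 * G + 1))"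
        by (rule mult_left_mono[OF T]) (use G0 in simp)
      also have "\<dots> \<le> e1" using G0 e1 by (simp add: field_simps)
      finally have T2: "2 * G * infsum (\<lambda>n. c n * \<bar>u (\<phi> i) n - u (\<phi> j) n\<bar>) UNIV \<le> e1" .
      have "infsum (Eterm a b p (\<lambda>n. u (\<phi> i) n - u (\<phi> j) n)) UNIV \<le> k2 * (\<bar>Ideriv a b c p q r (u (\<phi> i)) (\<lambda>n. u (\<phi> i) n - u (\<phi> j) n)\<bar>
           + \<bar>Ideriv a b c p q r (u (\<phi> j)) (\<lambda>n. u (\<phi> i) n - u (\<phi> j) n)\<bar>
           + 2 * G * infsum (\<lambda>n. c n * \<bar>u (\<phi> i) n - u (\<phi> j) n\<bar>) UNIV)"
        unfolding k2_def G_def by (rule S.key[OF uE uE ubd ubd])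
      also have "\<dots> \<le> k2 * (e1 + e1 + e1)"
        using Isb[OF pi(1), of "\<phi> i" "\<phi> j"] Isb[OF pi(2), of "\<phi> i" "\<phi> j"] T2 k2
        by (intro mult_left_mono) auto
      also have "\<dots> = \<epsilon>" using k2 by (simp add: e1_def)
      finally show ?thesis .
    qed
    thus ?thesis by blast
  qed
  have fatou: "\<exists>K. \<forall>i\<ge>K. inE a b p (\<lambda>n. u (\<phi> i) n - w0 n) \<and> infsum (Eterm a b p (\<lambda>n. u (\<phi> i) n - w0 n)) UNIV \<le> \<epsilon>"
    if eps: "\<epsilon> > 0" for \<epsilon>
  proof -
    obtain K where K: "\<And>i j. K \<le> i \<Longrightarrow> K \<le> j \<Longrightarrow> infsum (Eterm a b p (\<lambda>n. u (\<phi> i) n - u (\<phi> j) n)) UNIV \<le> \<epsilon>"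
      using cauchy[OF eps] by blast
    have "inE a b p (\<lambda>n. u (\<phi> i) n - w0 n) \<and> infsum (Eterm a b p (\<lambda>n. u (\<phi> i) n - w0 n)) UNIV \<le> \<epsilon>"
      if i: "i \<ge> K" for i
    proof -
      define h where "h = (\<lambda>n. u (\<phi> i) n - w0 n)"
      have fs: "sum (Eterm a b p h) F \<le> \<epsilon>" if F: "finite F" for F
      proof -
        have "(\<lambda>j. sum (Eterm a b p (\<lambda>n. u (\<phi> i) n - u (\<phi> j) n)) F) \<longlonglongrightarrow> sum (Eterm a b p h) F"
          unfolding h_def S.Eterm_eq fdiff_def
          by (intro tendsto_intros lim)
        moreover have "\<exists>N. \<forall>j\<ge>N. sum (Eterm a b p (\<lambda>n. u (\<phi> i) n - u (\<phi> j) n)) F \<le> \<epsilon>"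
        proof (intro exI allI impI)
          fix j assume j: "K \<le> j"
          have "sum (Eterm a b p (\<lambda>n. u (\<phi> i) n - u (\<phi> j) n)) F \<le> infsum (Eterm a b p (\<lambda>n. u (\<phi> i) n - u (\<phi> j) n)) UNIV"
            by (rule sum_le_infsum) (use S.inE_sub[OF uE uE] S.Eterm_nonneg F in \<open>auto simp: inE_def\<close>)
          also have "\<dots> \<le> \<epsilon>" using K[OF i j] .
          finally show "sum (Eterm a b p (\<lambda>n. u (\<phi> i) n - u (\<phi> j) n)) F \<le> \<epsilon>" .
        qed
        ultimately show ?thesis by (rule LIMSEQ_le_const2)
      qed
      have hs: "Eterm a b p h summable_on UNIV"
        by (rule nonneg_bdd_above_summable_on) (use S.Eterm_nonneg fs in \<open>auto intro!: bdd_aboveI2\<close>)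
      have "infsum (Eterm a b p h) UNIV \<le> \<epsilon>"
        by (rule infsum_le_finite_sums[OF hs]) (use fs in auto)
      thus ?thesis using hs by (simp add: inE_def h_def)
    qed
    thus ?thesis by blast
  qed
  obtain K0 where K0: "inE a b p (\<lambda>n. u (\<phi> K0) n - w0 n)"
    using fatou[of 1] by auto
  have "inE a b p (\<lambda>n. u (\<phi> K0) n - (u (\<phi> K0) n - w0 n))"
    by (rule S.inE_sub[OF uE K0])
  hence w0E: "inE a b p w0" by simp
  have conv: "(\<lambda>k. Enorm a b p (\<lambda>n. u (\<phi> k) n - w0 n)) \<longlonglongrightarrow> 0"
  proof (rule LIMSEQ_I)
    fix \<epsilon> :: real assume eps: "\<epsilon> > 0"
    define \<delta> where "\<delta> = (\<epsilon> / 2) powr p"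
    have d: "\<delta> > 0" using eps by (simp add: \<delta>_def)
    obtain K where K: "\<And>i. i \<ge> K \<Longrightarrow> infsum (Eterm a b p (\<lambda>n. u (\<phi> i) n - w0 n)) UNIV \<le> \<delta>"
      using fatou[OF d] by blast
    have "norm (Enorm a b p (\<lambda>n. u (\<phi> k) n - w0 n) - 0) < \<epsilon>" if k: "k \<ge> K" for k
    proof -
      have "Enorm a b p (\<lambda>n. u (\<phi> k) n - w0 n) \<le> \<delta> powr (1 / p)"
        unfolding S.Enorm_NN by (rule powr_mono2) (use K[OF k] pp S.NN_nonneg in auto)
      also have "\<delta> powr (1 / p) = \<epsilon> / 2" using eps pp by (simp add: \<delta>_def powr_powr)
      finally show ?thesis using eps S.Enorm_nonneg by simp
    qed
    thus "\<exists>no. \<forall>k\<ge>no. norm (Enorm a b p (\<lambda>n. u (\<phi> k) n - w0 n) - 0) < \<epsilon>" by blast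
  qed
  show ?thesis using phi w0E conv S.inD_iff by blast
qed

end
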